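(* For every integer $k \geq 1$, let $\mathcal{b}(k)$ denote the greatest common divisor of all the sums $\sum_{i=1}^{k} b_{n+i}$, $n \geq 0$. Then $$\mathcal{b}(k) = \begin{cases} \gcd\!\left(\tfrac12(B_k - k),\, P_k\right), & \text{if } k \text{ is even};\\ \gcd\!\left(\tfrac12(B_k - k),\, 2Q_k\right), & \text{if } k \text{ is odd}.\end{cases}$$
   Context: The Pell sequence $(P_n)_{n\ge0}$ is defined by $P_0=0$, $P_1=1$, $P_n = 2P_{n-1}+P_{n-2}$. The associated Pell sequence $(Q_n)_{n\ge0}$ is defined by $Q_0=1$, $Q_1=1$, $Q_n=2Q_{n-1}+Q_{n-2}$. The balancing sequence $(B_n)_{n\ge0}$ is defined by $B_0=0$, $B_1=1$, $B_n=6B_{n-1}-B_{n-2}$. The cobalancing sequence $(b_n)_{n\ge0}$ is defined by $b_0=0$, $b_1=0$, $b_n=6b_{n-1}-b_{n-2}+2$. *)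

theory Defs
  imports Main
begin

fun pell :: "nat \<Rightarrow> int" where
  "pell 0 = 0" | "pell (Suc 0) = 1"
| "pell (Suc (Suc n)) = 2 * pell (Suc n) + pell n"

fun assoc_pell :: "nat \<Rightarrow> int" where
  "assoc_pell 0 = 1" | "assoc_pell (Suc 0) = 1"
| "assoc_pell (Suc (Suc n)) = 2 * assoc_pell (Suc n) + assoc_pell n"

fun balancing :: "nat \<Rightarrow> int" where
  "balancing 0 = 0" | "balancing (Suc 0) = 1"
| "balancing (Suc (Suc n)) = 6 * balancing (Suc n) - balancing n"

fun cobalancing :: "nat \<Rightarrow> int" where
  "cobalancing 0 = 0" | "cobalancing (Suc 0) = 0"
| "cobalancing (Suc (Suc n)) = 6 * cobalancing (Suc n) - cobalancing n + 2"

definition cobal_gcd :: "nat \<Rightarrow> int" where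
  "cobal_gcd k = Gcd {(\<Sum>i=1..k. cobalancing (n + i)) | n. True}"

end

theory Submission
  imports Defs
begin

lemma Q_P: "assoc_pell m + pell m = pell (Suc m)"
  by (induction m rule: pell.induct) auto

lemma P_add: "pell (m + n) = pell m * assoc_pell n + assoc_pell m * pell n"
proof (induction n rule: pell.induct)
  case 1 then show ?case by simp
next
  case 2 then show ?case using Q_P[of m] by simp
next
  case (3 n)
  have "pell (m + Suc (Suc n)) = 2 * pell (m + Suc n) + pell (m + n)"
    by (simp add: add_Suc_right)
  also have "\<dots> = pell m * assoc_pell (Suc (Suc n)) + assoc_pell m * pell (Suc (Suc n))"
    using 3 by (simp add: algebra_simps)
  finally show ?case .
qed

lemma P4: "pell (Suc (Suc (Suc (Suc m)))) = 6 * pell (Suc (Suc m)) - pell m"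
  by simp

lemma B_P: "2 * balancing n = pell (2 * n)"
proof (induction n rule: balancing.induct)
  case 1 then show ?case by simp
next
  case 2 
  have "pell 2 = 2" by (simp add: numeral_2_eq_2)
  then show ?case by simp
next
  case (3 n)
  have e: "2 * Suc (Suc n) = Suc (Suc (Suc (Suc (2*n))))" "2 * Suc n = Suc (Suc (2*n))" by simp_all
  have "2 * balancing (Suc (Suc n)) = 6 * (2 * balancing (Suc n)) - 2 * balancing n"
    by simp
  also have "\<dots> = 6 * pell (Suc (Suc (2*n))) - pell (2*n)" using 3 e(2) by metis
  also have "\<dots> = pell (Suc (Suc (Suc (Suc (2*n)))))" by (rule P4[symmetric])
  finally show ?case by (simp only: e(1))
qed

lemma B_PQ: "balancing n = pell n * assoc_pell n"
proof -
  have "2 * balancing n = pell (n + n)" using B_P[of n] by (simp only: mult_2)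
  also have "\<dots> = 2 * (pell n * assoc_pell n)" using P_add[of n n] by (simp add: algebra_simps)
  finally show ?thesis by simp
qed

lemma B_diff: "balancing (Suc k) - balancing k = pell (Suc (2 * k))"
proof -
  have e: "2 * Suc k = Suc (Suc (2*k))" by simp
  have "2 * balancing (Suc k) = pell (Suc (Suc (2*k)))" using B_P[of "Suc k"] e by metis
  moreover have "2 * balancing k = pell (2*k)" using B_P[of k] by simp
  moreover have "pell (Suc (Suc (2*k))) = 2 * pell (Suc (2*k)) + pell (2*k)" by (rule pell.simps(3))
  ultimately show ?thesis by simp
qed

lemma P_odd: "pell (Suc (2*k)) = pell k * assoc_pell (Suc k) + assoc_pell k * pell (Suc k)"
proof -
  have "Suc (2*k) = k + Suc k" by simp
  then show ?thesis using P_add[of k "Suc k"] by metis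
qed

lemma cassini: "assoc_pell k * pell (Suc k) - pell k * assoc_pell (Suc k) = (-1)^k"
proof (induction k)
  case 0 then show ?case by simp
next
  case (Suc k)
  have "assoc_pell (Suc k) * pell (Suc (Suc k)) - pell (Suc k) * assoc_pell (Suc (Suc k))
     = - (assoc_pell k * pell (Suc k) - pell k * assoc_pell (Suc k))"
    by (simp add: algebra_simps)
  then show ?case using Suc by simp
qed

lemma Q_odd: "odd (assoc_pell k)"
  by (induction k rule: assoc_pell.induct) auto

lemma P_even: "even (pell k) \<longleftrightarrow> even k"
  by (induction k rule: pell.induct) auto

lemma Q_coprime: "coprime (assoc_pell k) (assoc_pell (Suc k))"
proof (induction k)
  case 0 then show ?case by simp
next
  case (Suc k)
  have "coprime (assoc_pell (Suc k)) (2 * assoc_pell (Suc k) + assoc_pell k)"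
    using Suc by (metis coprime_commute gcd_add_mult coprime_iff_gcd_eq_1)
  then show ?case by simp
qed

lemma P_coprime: "coprime (pell k) (pell (Suc k))"
proof (induction k)
  case 0 then show ?case by simp
next
  case (Suc k)
  have "coprime (pell (Suc k)) (2 * pell (Suc k) + pell k)"
    using Suc by (metis coprime_commute mult.commute gcd_add_mult coprime_iff_gcd_eq_1)
  then show ?case by simp
qed

lemma cob2: "2 * cobalancing (Suc m) = balancing (Suc m) - balancing m - 1"
  by (induction m rule: cobalancing.induct) (auto simp: algebra_simps)

lemma sumS: "2 * (\<Sum>i=1..k. cobalancing (n+i)) = balancing (n+k) - balancing n - int k"
proof (induction k)
  case 0 then show ?case by simp
next
  case (Suc k)
  have "2 * (\<Sum>i=1..Suc k. cobalancing (n+i)) = 2 * (\<Sum>i=1..k. cobalancing (n+i)) + 2 * cobalancing (Suc (n+k))"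
    by (simp add: algebra_simps)
  then show ?case using Suc cob2[of "n+k"] by simp
qed

lemma recS: "(\<Sum>i=1..k. cobalancing (Suc (Suc n)+i)) = 6 * (\<Sum>i=1..k. cobalancing (Suc n+i)) - (\<Sum>i=1..k. cobalancing (n+i)) + 2 * int k"
proof -
  have "(\<Sum>i=1..k. cobalancing (Suc (Suc n)+i)) = (\<Sum>i=1..k. 6 * cobalancing (Suc n+i) - cobalancing (n+i) + 2)"
    by (intro sum.cong) simp_all
  also have "\<dots> = 6 * (\<Sum>i=1..k. cobalancing (Suc n+i)) - (\<Sum>i=1..k. cobalancing (n+i)) + 2 * int k"
    by (simp add: sum.distrib sum_subtractf sum_distrib_left)
  finally show ?thesis .
qed


lemma key_dvd:
  fixes c a b u :: int
  assumes "c dvd a * u" "c dvd a * b" "coprime u b"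
  shows "c dvd a"
proof -
  have "c dvd gcd (a * u) (a * b)" using assms by simp
  also have "gcd (a * u) (a * b) = normalize (a * gcd u b)" by (rule gcd_mult_left)
  also have "\<dots> = normalize a" using assms(3) by simp
  finally show ?thesis by simp
qed

theorem theorem23:
  fixes k :: nat
  assumes "k \<ge> 1"
  shows "cobal_gcd k =
    (if even k then gcd ((balancing k - int k) div 2) (pell k)
     else gcd ((balancing k - int k) div 2) (2 * assoc_pell k))"
proof -
  define S where "S n = (\<Sum>i=1..k. cobalancing (n+i))" for n
  define X where "X = (if even k then pell k else 2 * assoc_pell k)"
  have "2 * S 0 = balancing (0+k) - balancing 0 - int k" unfolding S_def by (rule sumS)
  then have S0b: "2 * S 0 = balancing k - int k" by simp
  have S0: "2 * S 0 = pell k * assoc_pell k - int k"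
    using S0b B_PQ[of k] by simp
  have S0div: "(balancing k - int k) div 2 = S 0"
    using S0b by simp
  have "2 * S 1 = balancing (1+k) - balancing 1 - int k" unfolding S_def by (rule sumS)
  then have "2 * S 1 = balancing (Suc k) - 1 - int k" by simp
  then have "2 * S 1 - 2 * S 0 = pell (Suc (2 * k)) - 1"
    using S0b B_diff[of k] by simp
  then have S1d: "2 * (S 1 - S 0) = pell k * assoc_pell (Suc k) + assoc_pell k * pell (Suc k) - 1"
    using P_odd[of k] by simp
  have S1: "S 1 = S 0 + (if even k then pell k * assoc_pell (Suc k) else assoc_pell k * pell (Suc k))"
  proof (cases "even k")
    case True
    then have "assoc_pell k * pell (Suc k) - pell k * assoc_pell (Suc k) = 1" using cassini[of k] by simp
    then show ?thesis using S1d True by simp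
  next
    case False
    then have "assoc_pell k * pell (Suc k) - pell k * assoc_pell (Suc k) = -1" using cassini[of k] by simp
    then show ?thesis using S1d False by simp
  qed
  have rec: "S (Suc (Suc n)) = 6 * S (Suc n) - S n + 2 * int k" for n
    unfolding S_def by (rule recS)
  have rhs: "(if even k then gcd ((balancing k - int k) div 2) (pell k)
     else gcd ((balancing k - int k) div 2) (2 * assoc_pell k)) = gcd (S 0) X"
    by (simp add: S0div X_def)
  have twok: "2 * int k = 2 * (pell k * assoc_pell k) - 4 * S 0" using S0 by simp
  have "Gcd {S n | n. True} = gcd (S 0) X"
  proof (rule Gcd_eqI)
    show "normalize (gcd (S 0) X) = gcd (S 0) X" by simp
  next
    define g where "g = gcd (S 0) X"
    have g0: "g dvd S 0" and gX: "g dvd X" by (simp_all add: g_def)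
    have g1: "g dvd S 1"
    proof (cases "even k")
      case True
      then show ?thesis using g0 gX S1 by (simp add: X_def)
    next
      case False
      then have "even (pell (Suc k))" using P_even[of "Suc k"] by simp
      then obtain p where p: "pell (Suc k) = 2 * p" by blast
      have "S 1 = S 0 + X * p" using S1 False p by (simp add: X_def)
      then show ?thesis using g0 gX by simp
    qed
    have gk: "g dvd 2 * int k"
    proof -
      have "g dvd pell k * assoc_pell k * 2"
      proof (cases "even k")
        case True then show ?thesis using gX by (simp add: X_def)
      next
        case False
        then have "pell k * assoc_pell k * 2 = X * pell k" by (simp add: X_def)
        then show ?thesis using gX by (metis dvd_mult2)
      qed
      then show ?thesis using twok g0 by (simp add: dvd_diff mult.commute)
    qed
    have "g dvd S n \<and> g dvd S (Suc n)" for n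
    proof (induction n)
      case 0 then show ?case using g0 g1 by simp
    next
      case (Suc n)
      then show ?case using rec[of n] gk by simp
    qed
    then show "\<And>b. b \<in> {S n | n. True} \<Longrightarrow> gcd (S 0) X dvd b" unfolding g_def by blast
  next
    fix c assume H: "\<And>b. b \<in> {S n | n. True} \<Longrightarrow> c dvd b"
    have c0: "c dvd S 0" and c1: "c dvd S 1" and c2: "c dvd S 2" using H by blast+
    have "c dvd 2 * int k"
    proof -
      have "2 * int k = S 2 - 6 * S 1 + S 0" using rec[of 0] by (simp add: numeral_2_eq_2)
      then show ?thesis using c0 c1 c2 by simp
    qed
    then have cPQ: "c dvd pell k * (2 * assoc_pell k)"
    proof -
      have "pell k * (2 * assoc_pell k) = 2 * int k + 4 * S 0" using twok by simp
      then show ?thesis using \<open>c dvd 2 * int k\<close> c0 by simp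
    qed
    have cd: "c dvd S 1 - S 0" using c0 c1 by simp
    have "c dvd X"
    proof (cases "even k")
      case True
      have "c dvd pell k * assoc_pell (Suc k)" using cd S1 True by simp
      moreover have "coprime (assoc_pell (Suc k)) (2 * assoc_pell k)"
        using Q_odd[of "Suc k"] Q_coprime[of k] by (simp add: coprime_commute)
      ultimately have "c dvd pell k" using key_dvd cPQ by blast
      then show ?thesis using True by (simp add: X_def)
    next
      case False
      then have "even (pell (Suc k))" using P_even[of "Suc k"] by simp
      then obtain p where p: "pell (Suc k) = 2 * p" by blast
      have "c dvd (2 * assoc_pell k) * p" using cd S1 False p by (simp add: ac_simps)
      moreover have "c dvd (2 * assoc_pell k) * pell k" using cPQ by (simp add: ac_simps)
      moreover have "coprime p (pell k)"
        using P_coprime[of k] p by (metis coprime_commute coprime_mult_right_iff)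
      ultimately have "c dvd 2 * assoc_pell k" using key_dvd by blast
      then show ?thesis using False by (simp add: X_def)
    qed
    then show "c dvd gcd (S 0) X" using c0 by simp
  qed
  then show ?thesis unfolding cobal_gcd_def rhs S_def .
qed

end
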